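(* Let $n\ge 3$, $0<m<\frac{n-2}{n}$, $\eta>0$, $\rho>0$, and let $\alpha,\beta$ satisfy $\alpha=\frac{2\beta+\rho}{1-m}$ and $0<\alpha\le n\beta$. Let $v$ be a solution of $$\frac{n-1}{m}\left((v^m)''+\frac{n-1}{r}(v^m)'\right)+\alpha v+\beta r v'=0,\quad v>0,\quad \text{in }(0,\infty),$$ with $v(0)=\eta$, $v'(0)=0$, and let $w(r)=r^2v(r)^{1-m}$. Then there exists a constant $C_1>0$ such that $w(r)\le C_1$ for all $r\ge 1$. *)

theory Defs
  imports Complex_Main
begin

end

theory Submission
  imports Defs
begin

lemma maxsq_deriv:
  fixes y :: real
  shows "((\<lambda>x. (max x 0)^2) has_real_derivative 2 * max y 0) (at y)"
proof (cases "y = 0")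
  case True
  have "((\<lambda>x. ((max x 0)^2 - (max y 0)^2) / (x - y)) \<longlongrightarrow> 0) (at y)"
  proof (rule tendsto_sandwich[where f="\<lambda>x. - \<bar>x\<bar>" and h="\<lambda>x. \<bar>x\<bar>"])
    show "\<forall>\<^sub>F x in at y. - \<bar>x\<bar> \<le> ((max x 0)^2 - (max y 0)^2) / (x - y)"
      using True by (auto intro!: always_eventually simp: max_def power2_eq_square abs_if)
    show "\<forall>\<^sub>F x in at y. ((max x 0)^2 - (max y 0)^2) / (x - y) \<le> \<bar>x\<bar>"
      using True by (auto intro!: always_eventually simp: max_def power2_eq_square abs_if)
    show "((\<lambda>x. - \<bar>x\<bar>) \<longlongrightarrow> 0) (at y)" using True
      by (auto intro!: tendsto_eq_intros)
    show "((\<lambda>x. \<bar>x\<bar>) \<longlongrightarrow> 0) (at y)" using True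
      by (auto intro!: tendsto_eq_intros)
  qed
  then show ?thesis using True by (simp add: has_field_derivative_iff)
next
  case False
  show ?thesis
  proof (cases "y > 0")
    case True
    have "((\<lambda>x. x^2) has_real_derivative 2 * max y 0) (at y)"
      using True by (auto intro!: derivative_eq_intros)
    then show ?thesis
      apply (rule has_field_derivative_transform_within_open[where S="{0<..}"])
      using True by auto
  next
    case f2: False
    with False have "y < 0" by auto
    have "((\<lambda>x. 0) has_real_derivative 2 * max y 0) (at y)"
      using \<open>y<0\<close> by (auto intro!: derivative_eq_intros)
    then show ?thesis
      apply (rule has_field_derivative_transform_within_open[where S="{..<0}"])
      using \<open>y<0\<close> by auto
  qed
qed

lemma barrier:
  fixes f f' :: "real \<Rightarrow> real" and a b c :: real
  assumes "a \<le> b"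
    and d: "\<And>t. a \<le> t \<Longrightarrow> t \<le> b \<Longrightarrow> (f has_real_derivative f' t) (at t)"
    and s: "\<And>t. a \<le> t \<Longrightarrow> t \<le> b \<Longrightarrow> f t > c \<Longrightarrow> f' t \<le> 0"
    and fa: "f a \<le> c"
  shows "f b \<le> c"
proof -
  define G where "G t = (max (f t - c) 0)^2" for t
  have "G b \<le> G a"
  proof (rule DERIV_nonpos_imp_nonincreasing[OF assms(1)])
    fix x assume x: "a \<le> x" "x \<le> b"
    have "(G has_real_derivative (2 * max (f x - c) 0) * f' x) (at x)"
      unfolding G_def
      by (rule DERIV_chain2[OF maxsq_deriv, where g="\<lambda>t. f t - c"])
         (auto intro!: derivative_eq_intros d x)
    moreover have "(2 * max (f x - c) 0) * f' x \<le> 0"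
      using s[OF x] by (cases "f x > c") (auto simp: mult_nonneg_nonpos)
    ultimately show "\<exists>y. DERIV G x :> y \<and> y \<le> 0" by blast
  qed
  then have "G b \<le> 0" using fa by (simp add: G_def)
  then show ?thesis unfolding G_def
    by (metis max.absorb_iff2 max.cobounded2 nle_le power_zero_numeral sum_power2_le_zero_iff add_0 diff_le_eq)
qed
lemma alg_P:
  fixes n m \<alpha> \<beta> r x g u s d :: real
  assumes "r > 0" "x > 0" "g > 0" "m > 0" "n > 1"
    and K: "u * x = m * g * d"
    and ode: "(n - 1) / m * (s + (n - 1) / r * u) + \<alpha> * x + \<beta> * r * d = 0"
  shows "r * (((u + r * s) * (m * g) - r * u * (m * u)) / ((m * g) * (m * g)))
     = -(n-2) * (r * u / (m * g)) - m * (r * u / (m * g))^2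
       - (r^2 * x / g) * (\<alpha> + \<beta> * (r * u / (m * g))) / (n - 1)"
proof -
  have d: "d = u * x / (m * g)" using K assms by (simp add: field_simps)
  have s: "s = - (n-1)/r * u - m * (\<alpha> * x + \<beta> * r * d) / (n-1)"
    using ode assms by (simp add: field_simps)
  show ?thesis unfolding s d using assms
    by (simp add: field_simps power2_eq_square)
qed

theorem lemma2p6:
  fixes n :: nat and m \<eta> \<rho> \<alpha> \<beta> :: real
    and v v1 u1 u2 :: "real \<Rightarrow> real"
  assumes n: "n \<ge> 3"
    and m_pos: "0 < m" and m_bound: "m < (real n - 2) / real n"
    and eta: "\<eta> > 0" and rho: "\<rho> > 0"
    and alpha_def: "\<alpha> = (2 * \<beta> + \<rho>) / (1 - m)"
    and alpha_pos: "0 < \<alpha>" and alpha_le: "\<alpha> \<le> real n * \<beta>"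
    and v_pos: "\<forall>r>0. v r > 0"
    and v_cont: "continuous_on {0..} v"
    and v0: "v 0 = \<eta>"
    and v_deriv: "\<forall>r>0. (v has_real_derivative v1 r) (at r)"
    and v_deriv0: "(v has_real_derivative v1 0) (at 0 within {0..})"
    and v1_0: "v1 0 = 0"
    and vm_deriv: "\<forall>r>0. ((\<lambda>s. v s powr m) has_real_derivative u1 r) (at r)"
    and vm_deriv2: "\<forall>r>0. (u1 has_real_derivative u2 r) (at r)"
    and ode: "\<forall>r>0. (real n - 1) / m * (u2 r + (real n - 1) / r * u1 r)
                     + \<alpha> * v r + \<beta> * r * v1 r = 0"
  shows "\<exists>C1>0. \<forall>r\<ge>1. r^2 * v r powr (1 - m) \<le> C1"
proof -
  have n3: "real n \<ge> 3" using n by simp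
  have m1: "m < 1"
  proof -
    have "(real n - 2) / real n < 1" using n3 by (simp add: field_simps)
    then show ?thesis using m_bound by linarith
  qed
  have beta: "\<beta> > 0"
  proof -
    have "real n * \<beta> > 0" using alpha_pos alpha_le by linarith
    then show ?thesis using n3 by (simp add: zero_less_mult_iff)
  qed
  define k where "k = 2 / (1 - m)"
  have k: "k > 0" using m1 by (simp add: k_def)
  have kk: "(1 - m) * k = 2" using m1 unfolding k_def by (simp add: field_simps)
  define c where "c = (\<alpha> - \<beta> * k) / (real n - 1)"
  have ab: "\<alpha> - \<beta> * k = \<rho> / (1 - m)"
  proof -
    have "\<beta> * (2 / (1 - m)) = 2 * \<beta> / (1 - m)" by simp
    then show ?thesis unfolding alpha_def k_def by (simp add: diff_divide_distrib[symmetric])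
  qed
  have c: "c > 0" unfolding c_def ab using rho m1 n3 by simp
  define B where "B = (real n - 2) * k"
  define W1 where "W1 = (B + 1) / c"
  have W1: "W1 > 0" unfolding W1_def B_def using c k n3
    by (intro divide_pos_pos add_nonneg_pos mult_nonneg_nonneg) auto
  define g where "g t = v t powr m" for t
  have gpos: "g t > 0" if "t > 0" for t using v_pos that by (simp add: g_def less_imp_neq[symmetric])
  have K: "u1 r * v r = m * g r * v1 r" if r: "r > 0" for r
  proof -
    have "((\<lambda>s. v s powr m) has_real_derivative m * v r powr (m - 1) * v1 r) (at r)"
      using DERIV_chain2[OF has_real_derivative_powr[of "v r" m] v_deriv[rule_format, OF r]]
        v_pos r by (simp add: mult.assoc)
    then have "u1 r = m * v r powr (m - 1) * v1 r"
      using DERIV_unique vm_deriv r by blast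
    moreover have "v r powr (m - 1) * v r = v r powr m"
      using v_pos[rule_format, OF r] by (simp add: powr_diff)
    ultimately show ?thesis unfolding g_def by (simp add: algebra_simps)
  qed
  define P where "P t = t * u1 t / (m * g t)" for t
  define Pd where "Pd t = ((u1 t + t * u2 t) * (m * g t) - t * u1 t * (m * u1 t)) / ((m * g t) * (m * g t))" for t
  define w where "w t = t^2 * v t / g t" for t
  have gd: "(g has_real_derivative u1 t) (at t)" if "t > 0" for t
    using vm_deriv that unfolding g_def by blast
  have Pder: "(P has_real_derivative Pd t) (at t)" if t: "t > 0" for t
  proof -
    have "((\<lambda>t. t * u1 t) has_real_derivative u1 t + t * u2 t) (at t)"
      using DERIV_mult[OF DERIV_ident vm_deriv2[rule_format, OF t]] by (simp add: mult.commute)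
    moreover have "((\<lambda>t. m * g t) has_real_derivative m * u1 t) (at t)"
      using DERIV_cmult[OF gd[OF t]] by simp
    moreover have "m * g t \<noteq> 0" using gpos[OF t] m_pos by simp
    ultimately show ?thesis unfolding P_def Pd_def by (rule DERIV_divide)
  qed
  have Pd_eq: "t * Pd t = -(real n - 2) * P t - m * (P t)^2 - w t * (\<alpha> + \<beta> * P t) / (real n - 1)"
    if t: "t > 0" for t
    unfolding Pd_def P_def w_def
    by (rule alg_P[OF t v_pos[rule_format, OF t] gpos[OF t] m_pos _ K[OF t] ode[rule_format, OF t]])
       (use n3 in simp)
  define L where "L t = 2 * ln t + ln (v t) - ln (g t)" for t
  define Ld where "Ld t = 2 / t + v1 t / v t - u1 t / g t" for t
  have Lder: "(L has_real_derivative Ld t) (at t)" if t: "t > 0" for t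
    unfolding L_def Ld_def
    using t v_pos[rule_format, OF t] gpos[OF t]
    by (auto intro!: derivative_eq_intros gd v_deriv[rule_format] simp: field_simps)
  have Ld_eq: "t * Ld t = (1 - m) * (P t + k)" if t: "t > 0" for t
  proof -
    have "v1 t = u1 t * v t / (m * g t)" using K[OF t] m_pos gpos[OF t] by (simp add: field_simps)
    then have e1: "t * (v1 t / v t) = P t" unfolding P_def using t v_pos[rule_format, OF t] gpos[OF t] m_pos
      by (simp add: field_simps)
    have e2: "t * (u1 t / g t) = m * P t" unfolding P_def using t gpos[OF t] m_pos
      by (simp add: field_simps)
    have "t * Ld t = 2 + t * (v1 t / v t) - t * (u1 t / g t)" unfolding Ld_def using t
      by (simp add: algebra_simps)
    also have "\<dots> = (1 - m) * k + P t - m * P t" using e1 e2 kk by simp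
    finally show ?thesis by (simp add: algebra_simps)
  qed
  have L_w: "L t = ln (w t)" if t: "t > 0" for t
    unfolding L_def w_def using t v_pos[rule_format, OF t] gpos[OF t]
    by (simp add: ln_mult ln_div ln_realpow)
  have wpos: "w t > 0" if "t > 0" for t unfolding w_def using that v_pos gpos by simp
  have w_eq: "w t = t^2 * v t powr (1 - m)" if t: "t > 0" for t
    unfolding w_def g_def using v_pos[rule_format, OF t] by (simp add: powr_diff)
  define Pm where "Pm = max (P 1) 0"
  have Pbound: "P t \<le> Pm" if t: "t \<ge> 1" for t
  proof (rule barrier[where f=P and f'=Pd, OF t])
    show "(P has_real_derivative Pd s) (at s)" if "1 \<le> s" for s using Pder that by simp
    show "P 1 \<le> Pm" by (simp add: Pm_def)
    fix s assume s: "1 \<le> s" "P s > Pm"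
    then have Ps: "P s > 0" by (simp add: Pm_def)
    have s0: "s > 0" using s by simp
    have t1: "(real n - 2) * P s \<ge> 0" using Ps n3 by simp
    have t2: "m * (P s)^2 \<ge> 0" using m_pos by simp
    have t3: "w s * (\<alpha> + \<beta> * P s) / (real n - 1) \<ge> 0"
      using wpos[OF s0] Ps beta alpha_pos n3 by (intro divide_nonneg_nonneg mult_nonneg_nonneg) auto
    have "s * Pd s \<le> 0" unfolding Pd_eq[OF s0] using t1 t2 t3 by linarith
    then show "Pd s \<le> 0" using s(1) by (simp add: mult_le_0_iff)
  qed
  define H where "H x = (max (x + k) 0)^2" for x
  define psi where "psi t = L t + H (P t)" for t
  define psid where "psid t = Ld t + 2 * max (P t + k) 0 * Pd t" for t
  have psider: "(psi has_real_derivative psid t) (at t)" if t: "t > 0" for t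
  proof -
    have "(H \<circ> P has_real_derivative 2 * max (P t + k) 0 * Pd t) (at t)"
      unfolding H_def comp_def
    proof (rule DERIV_chain2[OF maxsq_deriv, where g="\<lambda>t. P t + k", simplified])
      show "((\<lambda>t. P t + k) has_real_derivative Pd t) (at t)"
        using DERIV_add[OF Pder[OF t] DERIV_const[of k]] by simp
    qed
    then show ?thesis unfolding psi_def psid_def
      using DERIV_add[OF Lder[OF t]] by (simp add: comp_def)
  qed
  define C where "C = max (psi 1) (ln W1 + H Pm)"
  have psibound: "psi t \<le> C" if t: "t \<ge> 1" for t
  proof (rule barrier[where f=psi and f'=psid, OF t])
    show "(psi has_real_derivative psid s) (at s)" if "1 \<le> s" for s using psider that by simp
    show "psi 1 \<le> C" by (simp add: C_def)
    fix s assume s: "1 \<le> s" "s \<le> t" "psi s > C"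
    have s0: "s > 0" using s by simp
    have "H (P s) \<le> H Pm" unfolding H_def using Pbound[OF s(1)]
      by (intro power_mono) auto
    then have "ln (w s) > ln W1" using s(3) L_w[OF s0] unfolding psi_def C_def by linarith
    then have wW: "w s > W1" using W1 wpos[OF s0] by simp
    have "s * psid s \<le> 0"
    proof (cases "P s + k > 0")
      case False
      then show ?thesis unfolding psid_def using Ld_eq[OF s0] m1 by (simp add: max_def mult_nonneg_nonpos)
    next
      case True
      have A: "- (real n - 2) * P s - m * (P s)^2 \<le> B"
      proof -
        have q1: "m * (P s)^2 \<ge> 0" using m_pos by simp
        have q2: "B \<ge> 0" unfolding B_def using n3 k by simp
        have q3: "(real n - 2) * (- P s) \<le> (real n - 2) * k" if "P s < 0"
          using \<open>P s + k > 0\<close> n3 by (intro mult_left_mono) auto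
        have q4: "(real n - 2) * P s \<ge> 0" if "P s \<ge> 0" using that n3 by simp
        show ?thesis
        proof (cases "P s \<ge> 0")
          case True then show ?thesis using q1 q2 q4 by linarith
        next
          case False
          then have "(real n - 2) * (- P s) \<le> (real n - 2) * k" using q3 by simp
          then show ?thesis using q1 unfolding B_def by (simp add: algebra_simps)
        qed
      qed
      have Bb: "w s * (\<alpha> + \<beta> * P s) / (real n - 1) \<ge> c * w s"
      proof -
        have "\<beta> * (- k) \<le> \<beta> * P s" using True beta by (intro mult_left_mono) auto
        then have "\<alpha> + \<beta> * P s \<ge> \<alpha> - \<beta> * k" by simp
        then have "w s * (\<alpha> + \<beta> * P s) \<ge> w s * (\<alpha> - \<beta> * k)"
          using wpos[OF s0] by (simp add: mult_left_mono)
        then have "w s * (\<alpha> - \<beta> * k) / (real n - 1) \<le> w s * (\<alpha> + \<beta> * P s) / (real n - 1)"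
          using n3 by (intro divide_right_mono) auto
        moreover have "c * w s = w s * (\<alpha> - \<beta> * k) / (real n - 1)" unfolding c_def by simp
        ultimately show ?thesis by simp
      qed
      have "c * w s \<ge> c * W1" using wW c by simp
      then have "c * w s \<ge> B + 1" unfolding W1_def using c by simp
      then have "s * Pd s \<le> -1" using Pd_eq[OF s0] A Bb by linarith
      then have "2 * (P s + k) * (s * Pd s) \<le> 2 * (P s + k) * (-1)"
        using True by (intro mult_left_mono) auto
      moreover have "s * psid s = (1 - m) * (P s + k) + 2 * (P s + k) * (s * Pd s)"
        unfolding psid_def using Ld_eq[OF s0] True by (simp add: algebra_simps)
      moreover have "(1 - m) * (P s + k) \<le> 2 * (P s + k)" using True m_pos by (intro mult_right_mono) auto
      ultimately show ?thesis by linarith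
    qed
    then show "psid s \<le> 0" using s0 by (simp add: mult_le_0_iff)
  qed
  show ?thesis
  proof (intro exI[of _ "exp C"] conjI allI impI)
    show "exp C > 0" by simp
    fix r :: real assume r: "r \<ge> 1"
    have r0: "r > 0" using r by simp
    have "H (P r) \<ge> 0" by (simp add: H_def)
    then have "ln (w r) \<le> C" using psibound[OF r] L_w[OF r0] unfolding psi_def by linarith
    then have "w r \<le> exp C" using wpos[OF r0] by (metis exp_le_cancel_iff exp_ln)
    then show "r^2 * v r powr (1 - m) \<le> exp C" using w_eq[OF r0] by simp
  qed
qed

end
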